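(* There exists $C>0$ such that for every $R\ge1$, every $y_0\in\mathbb R$, with $\psi_0:=\psi_R(\cdot-y_0)$, and every real-valued $f\in H^2(\mathbb R)$: $$2\|f\|^2_{H^1(\psi_0dx)}+\frac{C}{R^2}\|f\|^2_{L^2(\operatorname{supp}\partial_x\psi_0)}\ \ge\ (L_\Gamma f,f)_{\psi_0}\ \ge\ 4\lambda_0\|f\|^2_{H^1(\psi_0dx)}-\frac1{\lambda_0}\Big(\int\sqrt{\psi_0}\,f\sin\theta_*\,dx\Big)^2-\frac{C}{R^2}\|f\|^2_{L^2(\operatorname{supp}\partial_x\psi_0)}.$$
   Context: $\gamma\in(-1,1)$, $\Gamma:=\sqrt{1-\gamma^2}$, $\theta_*(x)=2\arctan(e^{-\Gamma x})$, and $L_\Gamma v:=-\partial_{xx}v+\Gamma^2(\cos^2\theta_*-\sin^2\theta_* )v$. $\lambda_0>0$ is a constant such that for all real $v\in H^1(\mathbb R)$, $(L_\Gamma v,v)_{L^2}\le2\|v\|^2_{H^1}$ and $(L_\Gamma v,v)_{L^2}\ge4\lambda_0\|v\|^2_{H^1}-\lambda_0^{-1}\big(\int v\sin\theta_*dx\big)^2$ (such a constant exists). Fix $\psi:\mathbb R\to[0,1]$ with $\psi\equiv0$ on $(-\infty,-1]$, $\psi\equiv1$ on $[1,\infty)$, $1-\psi(x)=\psi(-x)$, and $\sqrt\psi\in W^{3,\infty}$; $\psi_R(x):=\psi(x/R)$. $(f,g)_\varphi:=\int fg\varphi\,dx$, $\|f\|^2_{H^1(\varphi dx)}:=\int(|f|^2+|\partial_xf|^2)\varphi\,dx$,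 and $\|f\|_{L^2(I)}$ the $L^2$ norm over $I$. *)

theory Defs
  imports "HOL-Analysis.Analysis"
begin

definition Gam :: "real \<Rightarrow> real" where
  "Gam \<gamma> = sqrt (1 - \<gamma>\<^sup>2)"

definition theta_star :: "real \<Rightarrow> real \<Rightarrow> real" where
  "theta_star \<gamma> x = 2 * arctan (exp (- Gam \<gamma> * x))"

definition potV :: "real \<Rightarrow> real \<Rightarrow> real" where
  "potV \<gamma> x = (Gam \<gamma>)\<^sup>2 * ((cos (theta_star \<gamma> x))\<^sup>2 - (sin (theta_star \<gamma> x))\<^sup>2)"

definition sq_int :: "(real \<Rightarrow> real) \<Rightarrow> bool" where
  "sq_int f \<longleftrightarrow> f \<in> borel_measurable lborel \<and> integrable lborel (\<lambda>x. (f x)\<^sup>2)"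

text \<open>v \<in> H^1(R) with (weak) derivative v1: v is locally absolutely continuous with
  derivative v1 (fundamental theorem of calculus on every compact interval), v, v1 \<in> L^2.\<close>
definition H1 :: "(real \<Rightarrow> real) \<Rightarrow> (real \<Rightarrow> real) \<Rightarrow> bool" where
  "H1 v v1 \<longleftrightarrow> (\<forall>a b. a \<le> b \<longrightarrow> (v1 has_integral (v b - v a)) {a..b})
                 \<and> sq_int v \<and> sq_int v1"

definition H2 :: "(real \<Rightarrow> real) \<Rightarrow> (real \<Rightarrow> real) \<Rightarrow> (real \<Rightarrow> real) \<Rightarrow> bool" where
  "H2 f f1 f2 \<longleftrightarrow> (\<forall>x. (f has_real_derivative f1 x) (at x))
                   \<and> (\<forall>a b. a \<le> b \<longrightarrow> (f2 has_integral (f1 b - f1 a)) {a..b})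
                   \<and> sq_int f \<and> sq_int f1 \<and> sq_int f2"

definition LGam_form :: "real \<Rightarrow> (real \<Rightarrow> real) \<Rightarrow> (real \<Rightarrow> real) \<Rightarrow> real" where
  "LGam_form \<gamma> v v1 = (\<integral>x. (v1 x)\<^sup>2 + potV \<gamma> x * (v x)\<^sup>2 \<partial>lborel)"

definition H1_sqnorm :: "(real \<Rightarrow> real) \<Rightarrow> (real \<Rightarrow> real) \<Rightarrow> real" where
  "H1_sqnorm v v1 = (\<integral>x. (v x)\<^sup>2 + (v1 x)\<^sup>2 \<partial>lborel)"

definition H1w_sqnorm :: "(real \<Rightarrow> real) \<Rightarrow> (real \<Rightarrow> real) \<Rightarrow> (real \<Rightarrow> real) \<Rightarrow> real" where
  "H1w_sqnorm \<phi> f f1 = (\<integral>x. ((f x)\<^sup>2 + (f1 x)\<^sup>2) * \<phi> x \<partial>lborel)"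

definition LGam_wpair :: "real \<Rightarrow> (real \<Rightarrow> real) \<Rightarrow> (real \<Rightarrow> real) \<Rightarrow> (real \<Rightarrow> real) \<Rightarrow> real" where
  "LGam_wpair \<gamma> \<phi> f f2 = (\<integral>x. (- f2 x + potV \<gamma> x * f x) * f x * \<phi> x \<partial>lborel)"

definition L2_sqnorm_on :: "real set \<Rightarrow> (real \<Rightarrow> real) \<Rightarrow> real" where
  "L2_sqnorm_on I f = (LINT x:I|lborel. (f x)\<^sup>2)"

definition supp_fun :: "(real \<Rightarrow> real) \<Rightarrow> real set" where
  "supp_fun g = closure {x. g x \<noteq> 0}"

text \<open>g \<in> W^{3,\<infinity>}(R): g is C^1 with C^1 derivative whose derivative is bounded Lipschitz,
  i.e. g, g', g'' bounded and g'' Lipschitz (= g''' \<in> L^\<infinity>).\<close>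
definition W3inf :: "(real \<Rightarrow> real) \<Rightarrow> bool" where
  "W3inf g \<longleftrightarrow> (\<exists>g1 g2 L. (\<forall>x. (g has_real_derivative g1 x) (at x))
                     \<and> (\<forall>x. (g1 has_real_derivative g2 x) (at x))
                     \<and> L-lipschitz_on UNIV g2
                     \<and> bounded (range g) \<and> bounded (range g1) \<and> bounded (range g2))"

definition cutoff_psi :: "(real \<Rightarrow> real) \<Rightarrow> bool" where
  "cutoff_psi \<psi> \<longleftrightarrow> (\<forall>x. 0 \<le> \<psi> x \<and> \<psi> x \<le> 1)
     \<and> (\<forall>x. x \<le> -1 \<longrightarrow> \<psi> x = 0) \<and> (\<forall>x. 1 \<le> x \<longrightarrow> \<psi> x = 1)
     \<and> (\<forall>x. 1 - \<psi> x = \<psi> (- x))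
     \<and> W3inf (\<lambda>x. sqrt (\<psi> x))"

end

theory Submission
  imports Defs
begin


lemma ibp_global:
  fixes u w :: "real \<Rightarrow> real"
  assumes loc: "\<And>x. c \<le> x \<Longrightarrow> (w has_integral (u x - u c)) {c..x}"
    and u0: "\<And>x. x \<le> c \<Longrightarrow> u x = 0"
    and w0: "\<And>x. x < c \<Longrightarrow> w x = 0"
    and iu: "integrable lborel u" and iw: "integrable lborel w"
  shows "integral\<^sup>L lborel w = 0"
proof -
  have si: "set_integrable lborel A w" if "A \<in> sets lborel" for A
    unfolding set_integrable_def using integrable_mult_indicator[OF that iw] .
  have eq: "(LINT t:{c..x}|lborel. w t) = u x" if "c \<le> x" for x
  proof -
    have "(LINT t:{c..x}|lborel. w t) = integral {c..x} w"
      by (rule set_borel_integral_eq_integral(2)[OF si]) simp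
    also have "\<dots> = u x - u c" using loc[OF that] by (rule integral_unique)
    finally show ?thesis using u0[of c] by simp
  qed
  have full: "(LINT t:{c..}|lborel. w t) = integral\<^sup>L lborel w"
    unfolding set_lebesgue_integral_def
    by (rule Bochner_Integration.integral_cong) (auto simp: indicator_def w0 not_le)
  have "((\<lambda>b. LINT t:{c..b}|lborel. w t) \<longlongrightarrow> (LINT t:{c..}|lborel. w t)) at_top"
    by (rule tendsto_set_lebesgue_integral_at_top) (auto intro: si)
  then have lim: "(u \<longlongrightarrow> integral\<^sup>L lborel w) at_top"
    unfolding full
    by (rule Lim_transform_eventually) (auto simp: eventually_at_top_linorder eq intro!: exI[of _ c])
  show ?thesis
  proof (rule ccontr)
    let ?L = "integral\<^sup>L lborel w"
    assume ne: "?L \<noteq> 0"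
    then have "\<bar>?L\<bar>/2 > 0" by simp
    with lim have "eventually (\<lambda>x. dist (u x) ?L < \<bar>?L\<bar>/2) at_top"
      by (rule tendstoD)
    then obtain N where N: "\<And>x. x \<ge> N \<Longrightarrow> dist (u x) ?L < \<bar>?L\<bar>/2"
      by (auto simp: eventually_at_top_linorder)
    have "integrable lborel (\<lambda>x. (\<bar>?L\<bar>/2) * indicator {N..} x)"
    proof (rule Bochner_Integration.integrable_bound[OF iu])
      show "AE x in lborel. norm ((\<bar>?L\<bar>/2) * indicator {N..} x) \<le> norm (u x)"
      proof (rule AE_I2)
        fix x show "norm ((\<bar>?L\<bar>/2) * indicator {N..} x) \<le> norm (u x)"
        proof (cases "N \<le> x")
          case True
          have d: "\<bar>u x - ?L\<bar> < \<bar>?L\<bar>/2" using N[OF True] by (simp add: dist_real_def)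
          have "\<bar>?L\<bar> - \<bar>u x\<bar> \<le> \<bar>?L - u x\<bar>" by (rule abs_triangle_ineq2)
          also have "\<dots> = \<bar>u x - ?L\<bar>" by (rule abs_minus_commute)
          finally have "\<bar>?L\<bar>/2 \<le> \<bar>u x\<bar>" using d by linarith
          then show ?thesis using True by (simp add: indicator_def)
        next
          case False then show ?thesis by (simp add: indicator_def)
        qed
      qed
    qed simp
    then have "integrable lborel (\<lambda>x. (2/\<bar>?L\<bar>) * ((\<bar>?L\<bar>/2) * indicator {N..} x))"
      by (rule integrable_mult_right)
    also have "(\<lambda>x. (2/\<bar>?L\<bar>) * ((\<bar>?L\<bar>/2) * indicator {N..} x)) = (\<lambda>x. indicator {N..} x :: real)"
      using ne by (auto simp: fun_eq_iff)
    finally have "integrable lborel (\<lambda>x. indicator {N..} x :: real)" .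
    then have "emeasure lborel {N..} < \<infinity>"
      by (simp add: integrable_indicator_iff)
    moreover
    { assume fin: "emeasure lborel {N..} < \<infinity>"
      define M where "M = enn2real (emeasure lborel {N..})"
      have eM: "emeasure lborel {N..} = ennreal M" using fin unfolding M_def
        by (simp add: ennreal_enn2real less_top)
      have M0: "M \<ge> 0" unfolding M_def by simp
      have "emeasure lborel {N..N+(M+1)} \<le> emeasure lborel {N..}"
        by (rule emeasure_mono) auto
      then have "ennreal (M+1) \<le> ennreal M" using M0 eM by simp
      then have False using M0 by (simp add: ennreal_le_iff) }
    ultimately show False by blast
  qed
qed



lemma pair_prod_integrable:
  fixes F H :: "real \<Rightarrow> real"
  assumes F: "integrable lborel F" and H: "integrable lborel H"
  shows "integrable (lborel \<Otimes>\<^sub>M lborel) (\<lambda>(x,t). F x * H t)"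
proof -
  have [measurable]: "F \<in> borel_measurable lborel" "H \<in> borel_measurable lborel" using F H by auto
  show ?thesis
  proof (rule lborel_pair.Fubini_integrable)
    show "(\<lambda>(x,t). F x * H t) \<in> borel_measurable (lborel \<Otimes>\<^sub>M lborel)" by measurable
    have "integrable lborel (\<lambda>x. \<bar>F x\<bar> * (\<integral>y. \<bar>H y\<bar> \<partial>lborel))"
      using F by (intro integrable_mult_left) simp
    then show "integrable lborel (\<lambda>x. \<integral>y. norm ((\<lambda>(x,t). F x * H t) (x, y)) \<partial>lborel)"
      by (simp add: abs_mult)
    show "AE x in lborel. integrable lborel (\<lambda>y. (\<lambda>(x,t). F x * H t) (x, y))"
      using H by simp
  qed
qed

lemma ibp_local:
  fixes \<phi> \<phi>' f1 f2 :: "real \<Rightarrow> real"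
  assumes ab: "a \<le> b"
    and d\<phi>: "\<And>x. (\<phi> has_real_derivative \<phi>' x) (at x)"
    and c\<phi>': "continuous_on UNIV \<phi>'"
    and cf1: "continuous_on UNIV f1"
    and hf2: "\<And>s t. s \<le> t \<Longrightarrow> (f2 has_integral (f1 t - f1 s)) {s..t}"
    and if2: "set_integrable lborel {a..b} f2"
  shows "((\<lambda>x. \<phi> x * f2 x + \<phi>' x * f1 x) has_integral (\<phi> b * f1 b - \<phi> a * f1 a)) {a..b}"
proof -
  define I where "I = (indicator {a..b} :: real \<Rightarrow> real)"
  have c\<phi>: "continuous_on UNIV \<phi>"
    using d\<phi> by (meson DERIV_continuous continuous_at_imp_continuous_on)
  have iF: "integrable lborel (\<lambda>x. I x * f2 x)"
    using if2 unfolding set_integrable_def I_def by simp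
  have iH: "integrable lborel (\<lambda>t. I t * \<phi>' t)"
    using borel_integrable_atLeastAtMost'[of a b \<phi>'] c\<phi>' continuous_on_subset
    unfolding set_integrable_def I_def by fastforce
  have iK: "integrable lborel (\<lambda>t. I t * (\<phi>' t * f1 t))"
  proof -
    have "continuous_on {a..b} (\<lambda>t. \<phi>' t * f1 t)"
      by (intro continuous_on_mult continuous_on_subset[OF c\<phi>'] continuous_on_subset[OF cf1]) auto
    from borel_integrable_atLeastAtMost'[OF this]
    show ?thesis unfolding set_integrable_def I_def by simp
  qed
  have iH1: "integrable lborel (\<lambda>t. I t * \<phi>' t * f1 b)"
    using iH by (rule integrable_mult_left)
  have mF[measurable]: "(\<lambda>x. I x * f2 x) \<in> borel_measurable lborel" using iF by auto
  have mH[measurable]: "(\<lambda>x. I x * \<phi>' x) \<in> borel_measurable lborel" using iH by auto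
  have m\<phi>[measurable]: "\<phi> \<in> borel_measurable lborel"
    using c\<phi> by (simp add: borel_measurable_continuous_onI)
  obtain B where B: "\<And>x. x \<in> {a..b} \<Longrightarrow> \<bar>\<phi> x\<bar> \<le> B"
    using compact_imp_bounded[OF compact_continuous_image[OF continuous_on_subset[OF c\<phi>] compact_Icc]]
    unfolding bounded_iff by (metis image_eqI real_norm_def subset_UNIV)
  have iF\<phi>: "integrable lborel (\<lambda>x. I x * f2 x * \<phi> x)"
  proof -
    have iB: "integrable lborel (\<lambda>x. B * (I x * f2 x))" using iF by simp
    show ?thesis
  proof (rule Bochner_Integration.integrable_bound[OF iB])
    show "AE x in lborel. norm (I x * f2 x * \<phi> x) \<le> norm (B * (I x * f2 x))"
    proof (rule AE_I2)
      fix x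
      show "norm (I x * f2 x * \<phi> x) \<le> norm (B * (I x * f2 x))"
      proof (cases "x \<in> {a..b}")
        case True
        have "\<bar>I x * f2 x\<bar> * \<bar>\<phi> x\<bar> \<le> \<bar>I x * f2 x\<bar> * B"
          by (rule mult_left_mono[OF B[OF True]]) simp
        moreover have "B \<ge> 0" using B[OF True] by linarith
        ultimately show ?thesis by (simp add: abs_mult mult.commute)
      next
        case False then show ?thesis by (simp add: I_def)
      qed
    qed
  qed simp
  qed
  have h1: "\<phi> x - \<phi> a = (\<integral>t. indicator {a..x} t * \<phi>' t \<partial>lborel)" if "a \<le> x" for x
  proof -
    have "(\<integral>t. indicator {a..x} t *\<^sub>R \<phi>' t \<partial>lborel) = \<phi> x - \<phi> a"
      using that
      by (intro integral_FTC_atLeastAtMost continuous_on_subset[OF c\<phi>'])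
         (auto simp: has_real_derivative_iff_has_vector_derivative[symmetric] intro: DERIV_subset[OF d\<phi>])
    then show ?thesis by simp
  qed
  have h2: "f1 b - f1 t = (\<integral>x. indicator {t..b} x * f2 x \<partial>lborel)" if "a \<le> t" "t \<le> b" for t
  proof -
    have si: "set_integrable lborel {t..b} f2"
      by (rule set_integrable_subset[OF if2]) (use that in auto)
    have "(LINT x:{t..b}|lborel. f2 x) = integral {t..b} f2"
      by (rule set_borel_integral_eq_integral(2)[OF si])
    also have "\<dots> = f1 b - f1 t" using hf2[OF that(2)] by (rule integral_unique)
    finally show ?thesis by (simp add: set_lebesgue_integral_def)
  qed
  define G where "G x t = (I x * f2 x) * (of_bool (t \<le> x) * (I t * \<phi>' t))" for x t
  have iG: "integrable (lborel \<Otimes>\<^sub>M lborel) (\<lambda>(x,t). G x t)"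
  proof (rule Bochner_Integration.integrable_bound[OF pair_prod_integrable[OF iF iH]])
    show "(\<lambda>(x,t). G x t) \<in> borel_measurable (lborel \<Otimes>\<^sub>M lborel)"
      unfolding G_def by measurable
    show "AE p in lborel \<Otimes>\<^sub>M lborel. norm ((\<lambda>(x,t). G x t) p) \<le> norm ((\<lambda>(x,t). (I x * f2 x) * (I t * \<phi>' t)) p)"
      by (rule AE_I2) (auto simp: G_def abs_mult)
  qed
  have fub: "(\<integral>t. (\<integral>x. G x t \<partial>lborel) \<partial>lborel) = (\<integral>x. (\<integral>t. G x t \<partial>lborel) \<partial>lborel)"
    by (rule lborel_pair.Fubini_integral[OF iG])
  have e1: "(\<integral>t. G x t \<partial>lborel) = I x * f2 x * (\<phi> x - \<phi> a)" for x
  proof (cases "x \<in> {a..b}")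
    case True
    have "(\<integral>t. G x t \<partial>lborel) = (\<integral>t. (I x * f2 x) * (indicator {a..x} t * \<phi>' t) \<partial>lborel)"
      using True by (intro Bochner_Integration.integral_cong) (auto simp: G_def I_def indicator_def)
    also have "\<dots> = I x * f2 x * (\<phi> x - \<phi> a)" using True h1[of x] by simp
    finally show ?thesis .
  next
    case False then show ?thesis by (simp add: G_def I_def)
  qed
  have e2: "(\<integral>x. G x t \<partial>lborel) = I t * \<phi>' t * (f1 b - f1 t)" for t
  proof (cases "t \<in> {a..b}")
    case True
    have "(\<integral>x. G x t \<partial>lborel) = (\<integral>x. (I t * \<phi>' t) * (indicator {t..b} x * f2 x) \<partial>lborel)"
      using True by (intro Bochner_Integration.integral_cong) (auto simp: G_def I_def indicator_def)
    also have "\<dots> = I t * \<phi>' t * (f1 b - f1 t)" using True h2[of t] by simp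
    finally show ?thesis .
  next
    case False then show ?thesis by (simp add: G_def I_def)
  qed
  have key: "(\<integral>x. I x * f2 x * (\<phi> x - \<phi> a) \<partial>lborel) = (\<integral>t. I t * \<phi>' t * (f1 b - f1 t) \<partial>lborel)"
    using fub unfolding e1 e2 by simp

  have A1: "(\<integral>x. I x * f2 x * (\<phi> x - \<phi> a) \<partial>lborel) = (\<integral>x. I x * f2 x * \<phi> x \<partial>lborel) - \<phi> a * (\<integral>x. I x * f2 x \<partial>lborel)"
  proof -
    have "(\<integral>x. I x * f2 x * (\<phi> x - \<phi> a) \<partial>lborel) = (\<integral>x. I x * f2 x * \<phi> x - \<phi> a * (I x * f2 x) \<partial>lborel)"
      by (rule Bochner_Integration.integral_cong) (simp_all add: algebra_simps)
    also have "\<dots> = (\<integral>x. I x * f2 x * \<phi> x \<partial>lborel) - (\<integral>x. \<phi> a * (I x * f2 x) \<partial>lborel)"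
      by (rule Bochner_Integration.integral_diff) (use iF\<phi> iF in auto)
    finally show ?thesis by simp
  qed
  moreover have A2: "(\<integral>t. I t * \<phi>' t * (f1 b - f1 t) \<partial>lborel) = f1 b * (\<integral>t. I t * \<phi>' t \<partial>lborel) - (\<integral>t. I t * (\<phi>' t * f1 t) \<partial>lborel)"
  proof -
    have "(\<integral>t. I t * \<phi>' t * (f1 b - f1 t) \<partial>lborel) = (\<integral>t. I t * \<phi>' t * f1 b - I t * (\<phi>' t * f1 t) \<partial>lborel)"
      by (rule Bochner_Integration.integral_cong) (simp_all add: algebra_simps)
    also have "\<dots> = (\<integral>t. I t * \<phi>' t * f1 b \<partial>lborel) - (\<integral>t. I t * (\<phi>' t * f1 t) \<partial>lborel)"
      by (rule Bochner_Integration.integral_diff) (use iH1 iK in auto)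
    finally show ?thesis by (simp add: mult.commute)
  qed
  moreover have "(\<integral>x. I x * f2 x \<partial>lborel) = f1 b - f1 a"
    using h2[of a] ab by (simp add: I_def)
  moreover have "(\<integral>t. I t * \<phi>' t \<partial>lborel) = \<phi> b - \<phi> a"
    using h1[of b] ab by (simp add: I_def)
  ultimately have tot: "(\<integral>x. I x * f2 x * \<phi> x \<partial>lborel) + (\<integral>t. I t * (\<phi>' t * f1 t) \<partial>lborel) = \<phi> b * f1 b - \<phi> a * f1 a"
    using key by (simp add: algebra_simps)
  have iS: "integrable lborel (\<lambda>x. I x * (\<phi> x * f2 x + \<phi>' x * f1 x))"
    using Bochner_Integration.integrable_add[OF iF\<phi> iK] by (simp add: algebra_simps)
  have "(\<integral>x. I x * (\<phi> x * f2 x + \<phi>' x * f1 x) \<partial>lborel) = \<phi> b * f1 b - \<phi> a * f1 a"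
    using tot Bochner_Integration.integral_add[OF iF\<phi> iK] by (simp add: algebra_simps)
  moreover have "set_integrable lborel {a..b} (\<lambda>x. \<phi> x * f2 x + \<phi>' x * f1 x)"
    using iS unfolding set_integrable_def I_def by simp
  ultimately show ?thesis
    using set_borel_integral_eq_integral[of "{a..b}" "\<lambda>x. \<phi> x * f2 x + \<phi>' x * f1 x"]
    unfolding set_lebesgue_integral_def I_def
    by (simp add: integrable_integral)
qed



lemma deriv_zero_on_open:
  fixes h :: "real \<Rightarrow> real"
  assumes "open U" "x \<in> U" "\<And>y. y \<in> U \<Longrightarrow> h y = c" "(h has_real_derivative d) (at x)"
  shows "d = 0"
proof -
  have "((\<lambda>_. c) has_real_derivative d) (at x)"
    by (rule has_field_derivative_transform_within_open[OF assms(4) assms(1) assms(2)]) (use assms(3) in auto)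
  then show ?thesis using DERIV_const DERIV_unique by blast
qed

lemma bint:
  fixes h k :: "real \<Rightarrow> real"
  assumes "integrable lborel h" "k \<in> borel_measurable lborel" "\<And>x. \<bar>k x\<bar> \<le> M"
  shows "integrable lborel (\<lambda>x. k x * h x)"
proof -
  have iB: "integrable lborel (\<lambda>x. M * \<bar>h x\<bar>)" using assms(1) by simp
  have [measurable]: "h \<in> borel_measurable lborel" using assms(1) by auto
  show ?thesis
  proof (rule Bochner_Integration.integrable_bound[OF iB])
    show "AE x in lborel. norm (k x * h x) \<le> norm (M * \<bar>h x\<bar>)"
    proof (rule AE_I2)
      fix x
      have "\<bar>k x\<bar> * \<bar>h x\<bar> \<le> M * \<bar>h x\<bar>" by (rule mult_right_mono[OF assms(3)]) simp
      moreover have "M \<ge> 0" using assms(3)[of x] by linarith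
      ultimately show "norm (k x * h x) \<le> norm (M * \<bar>h x\<bar>)" by (simp add: abs_mult)
    qed
  qed (use assms(2) in measurable)
qed

lemma prodint:
  assumes "sq_int f" "sq_int h"
  shows "integrable lborel (\<lambda>x. f x * h x)"
proof -
  have [measurable]: "f \<in> borel_measurable lborel" "h \<in> borel_measurable lborel"
    using assms unfolding sq_int_def by auto
  have iB: "integrable lborel (\<lambda>x. (f x)\<^sup>2 + (h x)\<^sup>2)"
    using assms unfolding sq_int_def by auto
  show ?thesis
  proof (rule Bochner_Integration.integrable_bound[OF iB])
    show "AE x in lborel. norm (f x * h x) \<le> norm ((f x)\<^sup>2 + (h x)\<^sup>2)"
    proof (rule AE_I2)
      fix x
      have "0 \<le> (\<bar>f x\<bar> - \<bar>h x\<bar>)\<^sup>2" by simp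
      then have "2 * (\<bar>f x\<bar> * \<bar>h x\<bar>) \<le> \<bar>f x\<bar>\<^sup>2 + \<bar>h x\<bar>\<^sup>2"
        by (simp add: power2_diff)
      then have "2 * (\<bar>f x\<bar> * \<bar>h x\<bar>) \<le> (f x)\<^sup>2 + (h x)\<^sup>2" by simp
      moreover have "0 \<le> \<bar>f x\<bar> * \<bar>h x\<bar>" by simp
      ultimately have "\<bar>f x\<bar> * \<bar>h x\<bar> \<le> (f x)\<^sup>2 + (h x)\<^sup>2" by linarith
      moreover have "0 \<le> (f x)\<^sup>2 + (h x)\<^sup>2" by simp
      ultimately show "norm (f x * h x) \<le> norm ((f x)\<^sup>2 + (h x)\<^sup>2)"
        by (simp add: abs_mult)
    qed
  qed measurable
qed

lemma f1_cont:
  assumes "H2 f f1 f2"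
  shows "continuous_on UNIV f1"
proof -
  have hf2: "\<And>s t. s \<le> t \<Longrightarrow> (f2 has_integral (f1 t - f1 s)) {s..t}"
    using assms unfolding H2_def by auto
  have "isCont f1 x" for x
  proof -
    have int: "f2 integrable_on {x-1..x+1}" using hf2[of "x-1" "x+1"] by auto
    have c: "continuous_on {x-1..x+1} (\<lambda>t. integral {x-1..t} f2)"
      by (rule indefinite_integral_continuous_1[OF int])
    have "continuous_on {x-1..x+1} (\<lambda>t. f1 (x-1) + integral {x-1..t} f2)"
      by (rule continuous_on_add[OF continuous_on_const c])
    moreover have "f1 (x-1) + integral {x-1..t} f2 = f1 t" if "t \<in> {x-1..x+1}" for t
      using integral_unique[OF hf2[of "x-1" t]] that by simp
    ultimately have "continuous_on {x-1..x+1} f1"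
      by (rule continuous_on_eq)
    then show ?thesis
      by (rule continuous_on_interior) (simp add: interior_atLeastAtMost_real)
  qed
  then show ?thesis by (simp add: continuous_at_imp_continuous_on)
qed

lemma loc_int:
  assumes "sq_int f2"
  shows "set_integrable lborel {a..b} f2"
proof -
  have [measurable]: "f2 \<in> borel_measurable lborel" using assms unfolding sq_int_def by auto
  have iB: "integrable lborel (\<lambda>x. indicator {a..b} x + (f2 x)\<^sup>2 :: real)"
    using assms unfolding sq_int_def
    by (intro Bochner_Integration.integrable_add) (auto simp: integrable_indicator_iff emeasure_lborel_Icc_eq)
  show ?thesis unfolding set_integrable_def
  proof (rule Bochner_Integration.integrable_bound[OF iB])
    show "AE x in lborel. norm (indicator {a..b} x *\<^sub>R f2 x) \<le> norm (indicator {a..b} x + (f2 x)\<^sup>2 :: real)"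
    proof (rule AE_I2)
      fix x
      have "\<bar>f2 x\<bar> \<le> 1 + (f2 x)\<^sup>2"
      proof (cases "\<bar>f2 x\<bar> \<le> 1")
        case True then show ?thesis using zero_le_power2[of "f2 x"] by linarith
      next
        case False
        then have "\<bar>f2 x\<bar> * 1 \<le> \<bar>f2 x\<bar> * \<bar>f2 x\<bar>" by (intro mult_left_mono) auto
        then show ?thesis by (simp add: power2_eq_square abs_mult_self_eq)
      qed
      then show "norm (indicator {a..b} x *\<^sub>R f2 x) \<le> norm (indicator {a..b} x + (f2 x)\<^sup>2 :: real)"
        by (auto simp: indicator_def)
    qed
  qed measurable
qed



lemma psi_facts:
  assumes "cutoff_psi \<psi>"
  obtains g1 g2 B1 B2 where
    "\<And>x. ((\<lambda>x. sqrt (\<psi> x)) has_real_derivative g1 x) (at x)"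
    "\<And>x. (g1 has_real_derivative g2 x) (at x)"
    "continuous_on UNIV g2"
    "\<And>x. \<bar>g1 x\<bar> \<le> B1" "\<And>x. \<bar>g2 x\<bar> \<le> B2"
    "\<And>x. g1 x \<noteq> 0 \<Longrightarrow> sqrt (\<psi> x) > 0"
    "\<And>x. x < -1 \<Longrightarrow> g1 x = 0" "\<And>x. x < -1 \<Longrightarrow> g2 x = 0"
    "\<And>x. x \<le> -1 \<Longrightarrow> \<psi> x = 0"
    "\<And>x. 0 \<le> \<psi> x" "\<And>x. \<psi> x \<le> 1"
proof -
  from assms obtain g1 g2 L where
    d1: "\<And>x. ((\<lambda>x. sqrt (\<psi> x)) has_real_derivative g1 x) (at x)" and
    d2: "\<And>x. (g1 has_real_derivative g2 x) (at x)" and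
    lip: "L-lipschitz_on UNIV g2" and
    b1: "bounded (range g1)" and b2: "bounded (range g2)" and
    ps: "\<And>x. 0 \<le> \<psi> x \<and> \<psi> x \<le> 1" "\<And>x. x \<le> -1 \<Longrightarrow> \<psi> x = 0"
    unfolding cutoff_psi_def W3inf_def by blast
  obtain B1 where B1: "\<And>x. \<bar>g1 x\<bar> \<le> B1"
    using b1 unfolding bounded_iff by auto
  obtain B2 where B2: "\<And>x. \<bar>g2 x\<bar> \<le> B2"
    using b2 unfolding bounded_iff by auto
  have pos: "sqrt (\<psi> x) > 0" if "g1 x \<noteq> 0" for x
  proof (rule ccontr)
    assume "\<not> sqrt (\<psi> x) > 0"
    then have z: "sqrt (\<psi> x) = 0" using ps[of x] by auto
    have "g1 x = 0"
      by (rule DERIV_local_min[OF d1, of 1]) (use ps in \<open>auto simp: z\<close>)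
    with that show False by simp
  qed
  have z1: "g1 x = 0" if "x < -1" for x
    by (rule deriv_zero_on_open[of "{..<-1}" x "\<lambda>x. sqrt (\<psi> x)" 0]) (use that ps(2) d1 in auto)
  have z2: "g2 x = 0" if "x < -1" for x
    by (rule deriv_zero_on_open[of "{..<-1}" x g1 0]) (use that z1 d2 in auto)
  show ?thesis
    by (rule that[OF d1 d2 lipschitz_on_continuous_on[OF lip] B1 B2 pos z1 z2 ps(2)]) (use ps in auto)
qed



lemma integral_add3:
  fixes f g h :: "real \<Rightarrow> real"
  assumes "integrable lborel f" "integrable lborel g" "integrable lborel h"
  shows "(\<integral>x. f x + g x + h x \<partial>lborel) = integral\<^sup>L lborel f + integral\<^sup>L lborel g + integral\<^sup>L lborel h"
  using assms by (simp add: Bochner_Integration.integral_add Bochner_Integration.integrable_add)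

lemma integral_add4:
  fixes f g h k :: "real \<Rightarrow> real"
  assumes "integrable lborel f" "integrable lborel g" "integrable lborel h" "integrable lborel k"
  shows "(\<integral>x. f x + g x + h x + k x \<partial>lborel) = integral\<^sup>L lborel f + integral\<^sup>L lborel g + integral\<^sup>L lborel h + integral\<^sup>L lborel k"
  using assms by (simp add: Bochner_Integration.integral_add Bochner_Integration.integrable_add)

lemma cont_meas: "continuous_on UNIV h \<Longrightarrow> (h :: real \<Rightarrow> real) \<in> borel_measurable lborel"
  by (simp add: borel_measurable_continuous_onI)

lemma potV_bound:
  assumes "-1 < \<gamma>" "\<gamma> < 1"
  shows "\<bar>potV \<gamma> x\<bar> \<le> 1"
proof -
  have hg: "\<gamma>\<^sup>2 < 1" using assms by (simp add: abs_square_less_1 abs_less_iff)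
  then have g: "(Gam \<gamma>)\<^sup>2 = 1 - \<gamma>\<^sup>2"
    unfolding Gam_def by simp
  have "0 \<le> (Gam \<gamma>)\<^sup>2" "(Gam \<gamma>)\<^sup>2 \<le> 1" using g hg zero_le_power2[of \<gamma>] by auto
  moreover have "\<bar>(cos (theta_star \<gamma> x))\<^sup>2 - (sin (theta_star \<gamma> x))\<^sup>2\<bar> \<le> 1"
    using sin_cos_squared_add[of "theta_star \<gamma> x"] zero_le_power2[of "sin (theta_star \<gamma> x)"]
      zero_le_power2[of "cos (theta_star \<gamma> x)"] by linarith
  ultimately show ?thesis unfolding potV_def abs_mult
    by (simp add: abs_mult mult_le_one)
qed

lemma potV_cont: "continuous_on UNIV (potV \<gamma>)"
  unfolding potV_def theta_star_def by (intro continuous_intros)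



theorem mainTheorem10:
  fixes \<gamma> lam0 :: real and \<psi> :: "real \<Rightarrow> real"
  assumes "-1 < \<gamma>" "\<gamma> < 1"
    and "lam0 > 0"
    and "\<And>v v1. H1 v v1 \<Longrightarrow> LGam_form \<gamma> v v1 \<le> 2 * H1_sqnorm v v1"
    and "\<And>v v1. H1 v v1 \<Longrightarrow> LGam_form \<gamma> v v1 \<ge> 4 * lam0 * H1_sqnorm v v1
            - (1 / lam0) * (\<integral>x. v x * sin (theta_star \<gamma> x) \<partial>lborel)\<^sup>2"
    and "cutoff_psi \<psi>"
  shows "\<exists>C>0. \<forall>R\<ge>1. \<forall>y0 f f1 f2. H2 f f1 f2 \<longrightarrow>
     (let psi0 = (\<lambda>x. \<psi> ((x - y0) / R));
          S = supp_fun (deriv psi0) in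
        2 * H1w_sqnorm psi0 f f1 + C / R\<^sup>2 * L2_sqnorm_on S f \<ge> LGam_wpair \<gamma> psi0 f f2
      \<and> LGam_wpair \<gamma> psi0 f f2 \<ge> 4 * lam0 * H1w_sqnorm psi0 f f1
            - (1 / lam0) * (\<integral>x. sqrt (psi0 x) * f x * sin (theta_star \<gamma> x) \<partial>lborel)\<^sup>2
            - C / R\<^sup>2 * L2_sqnorm_on S f)"
proof -
  note hyp_up = assms(4) and hyp_lo = assms(5)
  obtain g1 g2 B1 B2 where
    dg: "\<And>x. ((\<lambda>x. sqrt (\<psi> x)) has_real_derivative g1 x) (at x)" and
    dg1: "\<And>x. (g1 has_real_derivative g2 x) (at x)" and
    cg2: "continuous_on UNIV g2" and
    B1: "\<And>x. \<bar>g1 x\<bar> \<le> B1" and B2: "\<And>x. \<bar>g2 x\<bar> \<le> B2" and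
    gpos: "\<And>x. g1 x \<noteq> 0 \<Longrightarrow> sqrt (\<psi> x) > 0" and
    z1: "\<And>x. x < -1 \<Longrightarrow> g1 x = 0" and z2: "\<And>x. x < -1 \<Longrightarrow> g2 x = 0" and
    z0: "\<And>x. x \<le> -1 \<Longrightarrow> \<psi> x = 0" and
    p0: "\<And>x. 0 \<le> \<psi> x" and p1: "\<And>x. \<psi> x \<le> 1"
    using psi_facts[OF assms(6)] by blast
  have B1nn: "0 \<le> B1" using B1[of 0] by linarith
  have B2nn: "0 \<le> B2" using B2[of 0] by linarith
  define K where "K = 2 * (B1\<^sup>2 + B2)"
  have Knn: "0 \<le> K" unfolding K_def using B2nn by simp
  define C where "C = B1\<^sup>2 + K + 2 * lam0 * K + 1"
  have "0 \<le> 2 * lam0 * K" using Knn assms(3) by simp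
  then have Cpos: "C > 0" unfolding C_def using Knn zero_le_power2[of B1] by linarith
  have main: "2 * H1w_sqnorm P f f1 + C / R\<^sup>2 * L2_sqnorm_on (supp_fun (deriv P)) f \<ge> LGam_wpair \<gamma> P f f2
      \<and> LGam_wpair \<gamma> P f f2 \<ge> 4 * lam0 * H1w_sqnorm P f f1
            - (1 / lam0) * (\<integral>x. sqrt (P x) * f x * sin (theta_star \<gamma> x) \<partial>lborel)\<^sup>2
            - C / R\<^sup>2 * L2_sqnorm_on (supp_fun (deriv P)) f"
    if R: "R \<ge> 1" and H: "H2 f f1 f2" and P_def: "P = (\<lambda>x. \<psi> ((x - y0) / R))" for R y0 f f1 f2 P
  proof -
    have Rpos: "R > 0" using R by simp
    have df: "\<And>x. (f has_real_derivative f1 x) (at x)" and hf2: "\<And>s t. s \<le> t \<Longrightarrow> (f2 has_integral (f1 t - f1 s)) {s..t}"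
      and sf: "sq_int f" and sf1: "sq_int f1" and sf2: "sq_int f2"
      using H unfolding H2_def by auto
    have cf1: "continuous_on UNIV f1" by (rule f1_cont[OF H])
    have cf: "continuous_on UNIV f"
      using df by (meson DERIV_continuous continuous_at_imp_continuous_on)
    define a where "a x = g1 ((x - y0) / R) / R" for x
    define P1 where "P1 x = 2 * sqrt (P x) * a x" for x
    define P2 where "P2 x = 2 * ((a x)\<^sup>2 + sqrt (P x) * (g2 ((x - y0) / R) / R\<^sup>2))" for x
    have ds: "((\<lambda>x. (x - y0) / R) has_real_derivative 1 / R) (at x)" for x
      using Rpos by (auto intro!: derivative_eq_intros)
    have dg0: "((\<lambda>x. sqrt (P x)) has_real_derivative a x) (at x)" for x
      unfolding P_def a_def using DERIV_chain2[OF dg ds[of x]] by simp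
    have da: "(a has_real_derivative g2 ((x - y0) / R) / R\<^sup>2) (at x)" for x
    proof -
      have "((\<lambda>x. g1 ((x - y0) / R)) has_real_derivative g2 ((x - y0) / R) * (1 / R)) (at x)"
        by (rule DERIV_chain2[OF dg1 ds])
      then have "((\<lambda>x. g1 ((x - y0) / R) / R) has_real_derivative g2 ((x - y0) / R) * (1 / R) / R) (at x)"
        by (rule DERIV_cdivide)
      then show ?thesis unfolding a_def by (simp add: power2_eq_square)
    qed
    have Pnn: "0 \<le> P x" "P x \<le> 1" for x unfolding P_def using p0 p1 by auto
    have Psq: "sqrt (P x) * sqrt (P x) = P x" for x using Pnn by simp
    have Pfun: "P = (\<lambda>x. sqrt (P x) * sqrt (P x))" using Psq by simp
    have dP: "(P has_real_derivative P1 x) (at x)" for x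
    proof -
      have "((\<lambda>x. sqrt (P x) * sqrt (P x)) has_real_derivative a x * sqrt (P x) + sqrt (P x) * a x) (at x)"
        by (rule DERIV_cong[OF DERIV_mult[OF dg0 dg0]]) (simp add: algebra_simps)
      then show ?thesis unfolding P1_def by (subst Pfun) (simp add: algebra_simps)
    qed
    have dP1: "(P1 has_real_derivative P2 x) (at x)" for x
    proof -
      have "((\<lambda>x. 2 * (sqrt (P x) * a x)) has_real_derivative 2 * (a x * a x + sqrt (P x) * (g2 ((x - y0) / R) / R\<^sup>2))) (at x)"
        by (rule DERIV_cong[OF DERIV_cmult[OF DERIV_mult[OF dg0 da]]]) (simp add: algebra_simps)
      then show ?thesis unfolding P1_def[abs_def] P2_def by (simp add: algebra_simps power2_eq_square)
    qed
    have cg0: "continuous_on UNIV (\<lambda>x. sqrt (P x))"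
      using dg0 by (meson DERIV_continuous continuous_at_imp_continuous_on)
    have ca: "continuous_on UNIV a"
      using da by (meson DERIV_continuous continuous_at_imp_continuous_on)
    have cP: "continuous_on UNIV P"
      using dP by (meson DERIV_continuous continuous_at_imp_continuous_on)
    have cP1: "continuous_on UNIV P1"
      using dP1 by (meson DERIV_continuous continuous_at_imp_continuous_on)
    have cP2: "continuous_on UNIV P2"
    proof -
      have "isCont (\<lambda>x. g2 ((x - y0) / R)) x" for x
        by (rule isCont_o2[OF _ continuous_on_interior[OF cg2]]) (use Rpos in \<open>auto intro!: continuous_intros\<close>)
      then have "continuous_on UNIV (\<lambda>x. g2 ((x - y0) / R))"
        by (simp add: continuous_at_imp_continuous_on)
      then show ?thesis unfolding P2_def[abs_def]
        using Rpos by (intro continuous_intros ca cg0 cP) auto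
    qed
    have a2: "(a x)\<^sup>2 \<le> B1\<^sup>2 / R\<^sup>2" for x
    proof -
      have "\<bar>g1 ((x - y0) / R)\<bar>\<^sup>2 \<le> B1\<^sup>2" by (rule power_mono[OF B1]) simp
      then show ?thesis unfolding a_def by (simp add: power_divide divide_right_mono)
    qed
    have abnd: "\<bar>a x\<bar> \<le> B1" for x
    proof -
      have "\<bar>a x\<bar> = \<bar>g1 ((x - y0) / R)\<bar> / R" unfolding a_def using Rpos by simp
      also have "\<dots> \<le> \<bar>g1 ((x - y0) / R)\<bar>" using R Rpos by (simp add: divide_le_eq mult_le_cancel_left1)
      finally show ?thesis using B1 order_trans by blast
    qed
    have g0b: "\<bar>sqrt (P x)\<bar> \<le> 1" for x using Pnn by simp
    have P1b: "\<bar>P1 x\<bar> \<le> 2 * B1" for x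
    proof -
      have "\<bar>P1 x\<bar> = 2 * (\<bar>sqrt (P x)\<bar> * \<bar>a x\<bar>)" unfolding P1_def by (simp add: abs_mult)
      also have "\<dots> \<le> 2 * (1 * B1)" by (intro mult_left_mono mult_mono g0b abnd) auto
      finally show ?thesis by simp
    qed
    have P2b: "\<bar>P2 x\<bar> \<le> K / R\<^sup>2" for x
    proof -
      define T where "T = sqrt (P x) * (g2 ((x - y0) / R) / R\<^sup>2)"
      have "\<bar>T\<bar> \<le> 1 * (B2 / R\<^sup>2)"
        unfolding T_def abs_mult using B2 Rpos
        by (intro mult_mono g0b) (auto simp: divide_right_mono)
      then have "\<bar>T\<bar> \<le> B2 / R\<^sup>2" by simp
      moreover have "\<bar>(a x)\<^sup>2 + T\<bar> \<le> (a x)\<^sup>2 + \<bar>T\<bar>" using abs_triangle_ineq[of "(a x)\<^sup>2" T] by simp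
      ultimately have X: "\<bar>(a x)\<^sup>2 + T\<bar> \<le> B1\<^sup>2 / R\<^sup>2 + B2 / R\<^sup>2" using a2[of x] by linarith
      have "\<bar>P2 x\<bar> = 2 * \<bar>(a x)\<^sup>2 + T\<bar>" unfolding P2_def T_def by (simp only: abs_mult abs_numeral)
      with X have "\<bar>P2 x\<bar> \<le> 2 * (B1\<^sup>2 / R\<^sup>2 + B2 / R\<^sup>2)" by simp
      then show ?thesis unfolding K_def by (simp add: add_divide_distrib)
    qed
    have derivP: "deriv P = P1" by (rule ext) (rule DERIV_imp_deriv[OF dP])
    define S where "S = supp_fun (deriv P)"
    have S_eq: "S = closure {x. P1 x \<noteq> 0}" by (simp add: S_def supp_fun_def derivP)
    have Sc: "closed S" unfolding S_eq by (rule closed_closure)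
    have Sm: "S \<in> sets lborel" using borel_closed[OF Sc] by simp
    have s1: "x \<in> S" if "a x \<noteq> 0" for x
    proof -
      have "g1 ((x - y0) / R) \<noteq> 0" using that unfolding a_def by auto
      then have "sqrt (\<psi> ((x - y0) / R)) > 0" by (rule gpos)
      then have "sqrt (P x) > 0" unfolding P_def by simp
      then have "P1 x \<noteq> 0" unfolding P1_def using that by simp
      then show ?thesis unfolding S_eq by (intro closure_subset[THEN subsetD]) simp
    qed
    have s2: "x \<in> S" if "P2 x \<noteq> 0" for x
    proof (rule ccontr)
      assume xS: "x \<notin> S"
      have "P2 x = 0"
      proof (rule deriv_zero_on_open[of "- S" x P1 0 "P2 x"])
        show "open (- S)" using Sc by auto
        show "x \<in> - S" using xS by simp
        show "P1 y = 0" if "y \<in> - S" for y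
          using that closure_subset[of "{x. P1 x \<noteq> 0}"] unfolding S_eq by blast
        show "(P1 has_real_derivative P2 x) (at x)" by (rule dP1)
      qed
      with that show False by simp
    qed
    have mf[measurable]: "f \<in> borel_measurable lborel" by (rule cont_meas[OF cf])
    have mf1[measurable]: "f1 \<in> borel_measurable lborel" by (rule cont_meas[OF cf1])
    have mP[measurable]: "P \<in> borel_measurable lborel" by (rule cont_meas[OF cP])
    have mP1[measurable]: "P1 \<in> borel_measurable lborel" by (rule cont_meas[OF cP1])
    have mP2[measurable]: "P2 \<in> borel_measurable lborel" by (rule cont_meas[OF cP2])
    have ma[measurable]: "a \<in> borel_measurable lborel" by (rule cont_meas[OF ca])
    have mV[measurable]: "potV \<gamma> \<in> borel_measurable lborel" by (rule cont_meas[OF potV_cont])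
    have iff: "integrable lborel (\<lambda>x. (f x)\<^sup>2)" using sf unfolding sq_int_def by auto
    have if1f1: "integrable lborel (\<lambda>x. (f1 x)\<^sup>2)" using sf1 unfolding sq_int_def by auto
    have iff1: "integrable lborel (\<lambda>x. f x * f1 x)" by (rule prodint[OF sf sf1])
    have iff2: "integrable lborel (\<lambda>x. f x * f2 x)" by (rule prodint[OF sf sf2])
    have iA1: "integrable lborel (\<lambda>x. (a x)\<^sup>2 * (f x)\<^sup>2)"
    proof (rule bint[OF iff, of _ "B1\<^sup>2"])
      show "(\<lambda>x. (a x)\<^sup>2) \<in> borel_measurable lborel" by measurable
      fix x
      have "\<bar>a x\<bar>\<^sup>2 \<le> B1\<^sup>2" by (rule power_mono[OF abnd]) simp
      then show "\<bar>(a x)\<^sup>2\<bar> \<le> B1\<^sup>2" by simp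
    qed
    have iA2: "integrable lborel (\<lambda>x. P1 x * (f x * f1 x))"
      by (rule bint[OF iff1 mP1 P1b])
    have iA3: "integrable lborel (\<lambda>x. P x * (f1 x)\<^sup>2)"
      by (rule bint[OF if1f1 mP, of 1]) (use Pnn in auto)
    have iA4: "integrable lborel (\<lambda>x. potV \<gamma> x * P x * (f x)\<^sup>2)"
    proof (rule bint[OF iff, of _ 1])
      show "(\<lambda>x. potV \<gamma> x * P x) \<in> borel_measurable lborel" by measurable
      fix x
      have "\<bar>potV \<gamma> x\<bar> * \<bar>P x\<bar> \<le> 1 * 1"
        by (intro mult_mono potV_bound assms(1,2)) (use Pnn[of x] in auto)
      then show "\<bar>potV \<gamma> x * P x\<bar> \<le> 1" by (simp add: abs_mult)
    qed
    have iA5: "integrable lborel (\<lambda>x. P x * (f x * f2 x))"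
      by (rule bint[OF iff2 mP, of 1]) (use Pnn in auto)
    have iA6: "integrable lborel (\<lambda>x. P x * (f x)\<^sup>2)"
      by (rule bint[OF iff mP, of 1]) (use Pnn in auto)
    have iA7: "integrable lborel (\<lambda>x. P2 x * (f x)\<^sup>2)"
      by (rule bint[OF iff mP2 P2b])
    define c where "c = y0 - 2 * R"
    have lc: "(x - y0) / R \<le> -2" if "x \<le> c" for x
      using that Rpos unfolding c_def by (simp add: pos_divide_le_eq)
    have lc': "(x - y0) / R < -2" if "x < c" for x
      using that Rpos unfolding c_def by (simp add: pos_divide_less_eq)
    have Pz: "P x = 0" if "x \<le> c" for x
      unfolding P_def using z0 lc[OF that] by simp
    have az: "a x = 0" if "x < c" for x
      unfolding a_def using z1 lc'[OF that] by simp
    have P1z: "P1 x = 0" if "x < c" for x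
      unfolding P1_def using az[OF that] by simp
    have P2z: "P2 x = 0" if "x < c" for x
      unfolding P2_def using az[OF that] Pz[of x] that by simp
    have dfsq: "((\<lambda>x. (f x)\<^sup>2) has_real_derivative 2 * (f x * f1 x)) (at x)" for x
      by (rule DERIV_cong[OF DERIV_mult[OF df df, unfolded power2_eq_square[symmetric]]])
        (simp add: algebra_simps)
    have ibp2: "(\<integral>x. P2 x * (f x)\<^sup>2 + P1 x * (2 * (f x * f1 x)) \<partial>lborel) = 0"
    proof (rule ibp_global[where c=c and u="\<lambda>x. P1 x * (f x)\<^sup>2"])
      fix x assume "c \<le> x"
      show "((\<lambda>x. P2 x * (f x)\<^sup>2 + P1 x * (2 * (f x * f1 x))) has_integral (P1 x * (f x)\<^sup>2 - P1 c * (f c)\<^sup>2)) {c..x}"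
      proof (rule fundamental_theorem_of_calculus[OF \<open>c \<le> x\<close>])
        fix t
        have "((\<lambda>x. P1 x * (f x)\<^sup>2) has_real_derivative P2 t * (f t)\<^sup>2 + P1 t * (2 * (f t * f1 t))) (at t)"
          by (rule DERIV_cong[OF DERIV_mult[OF dP1 dfsq]]) (simp add: algebra_simps)
        then show "((\<lambda>x. P1 x * (f x)\<^sup>2) has_vector_derivative P2 t * (f t)\<^sup>2 + P1 t * (2 * (f t * f1 t))) (at t within {c..x})"
          by (simp add: has_real_derivative_iff_has_vector_derivative has_vector_derivative_at_within)
      qed
    next
      fix x :: real assume "x \<le> c"
      show "P1 x * (f x)\<^sup>2 = 0" unfolding P1_def using Pz[OF \<open>x \<le> c\<close>] by simp
    next
      fix x :: real assume "x < c"
      show "P2 x * (f x)\<^sup>2 + P1 x * (2 * (f x * f1 x)) = 0" using P1z P2z \<open>x < c\<close> by simp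
    next
      show "integrable lborel (\<lambda>x. P1 x * (f x)\<^sup>2)"
        by (rule bint[OF iff mP1 P1b])
      show "integrable lborel (\<lambda>x. P2 x * (f x)\<^sup>2 + P1 x * (2 * (f x * f1 x)))"
      proof (intro Bochner_Integration.integrable_add iA7)
        have "integrable lborel (\<lambda>x. 2 * (P1 x * (f x * f1 x)))" using iA2 by simp
        moreover have "(\<lambda>x. 2 * (P1 x * (f x * f1 x))) = (\<lambda>x. P1 x * (2 * (f x * f1 x)))"
          by (simp add: fun_eq_iff)
        ultimately show "integrable lborel (\<lambda>x. P1 x * (2 * (f x * f1 x)))" by simp
      qed
    qed
    have E2: "(\<integral>x. P2 x * (f x)\<^sup>2 \<partial>lborel) + 2 * (\<integral>x. P1 x * (f x * f1 x) \<partial>lborel) = 0"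
    proof -
      have "(\<integral>x. P2 x * (f x)\<^sup>2 + 2 * (P1 x * (f x * f1 x)) \<partial>lborel) = 0"
        using ibp2 by (simp add: mult.left_commute)
      moreover have "(\<integral>x. P2 x * (f x)\<^sup>2 + 2 * (P1 x * (f x * f1 x)) \<partial>lborel)
          = (\<integral>x. P2 x * (f x)\<^sup>2 \<partial>lborel) + (\<integral>x. 2 * (P1 x * (f x * f1 x)) \<partial>lborel)"
        by (rule Bochner_Integration.integral_add) (use iA7 iA2 in auto)
      ultimately show ?thesis by simp
    qed
    have ibp1: "(\<integral>x. P x * f x * f2 x + (P1 x * f x + P x * f1 x) * f1 x \<partial>lborel) = 0"
    proof (rule ibp_global[where c=c and u="\<lambda>x. P x * f x * f1 x"])
      fix x assume "c \<le> x"
      show "((\<lambda>x. P x * f x * f2 x + (P1 x * f x + P x * f1 x) * f1 x) has_integral (P x * f x * f1 x - P c * f c * f1 c)) {c..x}"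
      proof (rule ibp_local[where \<phi>="\<lambda>x. P x * f x" and \<phi>'="\<lambda>x. P1 x * f x + P x * f1 x"])
        show "c \<le> x" by fact
        show "((\<lambda>x. P x * f x) has_real_derivative P1 t * f t + P t * f1 t) (at t)" for t
          by (rule DERIV_cong[OF DERIV_mult[OF dP df]]) (simp add: algebra_simps)
        show "continuous_on UNIV (\<lambda>x. P1 x * f x + P x * f1 x)"
          by (intro continuous_intros cP1 cf cP cf1)
        show "continuous_on UNIV f1" by (rule cf1)
        show "\<And>s t. s \<le> t \<Longrightarrow> (f2 has_integral f1 t - f1 s) {s..t}" by (rule hf2)
        show "set_integrable lborel {c..x} f2" by (rule loc_int[OF sf2])
      qed
    next
      fix x :: real assume "x \<le> c"
      show "P x * f x * f1 x = 0" using Pz[OF \<open>x \<le> c\<close>] by simp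
    next
      fix x :: real assume "x < c"
      show "P x * f x * f2 x + (P1 x * f x + P x * f1 x) * f1 x = 0"
        using P1z[OF \<open>x < c\<close>] Pz[of x] \<open>x < c\<close> by simp
    next
      have "integrable lborel (\<lambda>x. P x * (f x * f1 x))"
        by (rule bint[OF iff1 mP, of 1]) (use Pnn in auto)
      then show "integrable lborel (\<lambda>x. P x * f x * f1 x)" by (simp add: mult.assoc)
      have "integrable lborel (\<lambda>x. P x * (f x * f2 x) + P1 x * (f x * f1 x) + P x * (f1 x)\<^sup>2)"
        by (intro Bochner_Integration.integrable_add iA5 iA2 iA3)
      moreover have "(\<lambda>x. P x * (f x * f2 x) + P1 x * (f x * f1 x) + P x * (f1 x)\<^sup>2)
          = (\<lambda>x. P x * f x * f2 x + (P1 x * f x + P x * f1 x) * f1 x)"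
        by (simp add: fun_eq_iff algebra_simps power2_eq_square)
      ultimately show "integrable lborel (\<lambda>x. P x * f x * f2 x + (P1 x * f x + P x * f1 x) * f1 x)"
        by simp
    qed
    have I1: "(\<integral>x. P x * (f x * f2 x) \<partial>lborel) + (\<integral>x. P1 x * (f x * f1 x) \<partial>lborel) + (\<integral>x. P x * (f1 x)\<^sup>2 \<partial>lborel) = 0"
    proof -
      have "(\<lambda>x. P x * f x * f2 x + (P1 x * f x + P x * f1 x) * f1 x)
          = (\<lambda>x. P x * (f x * f2 x) + P1 x * (f x * f1 x) + P x * (f1 x)\<^sup>2)"
        by (simp add: fun_eq_iff algebra_simps power2_eq_square)
      with ibp1 have "(\<integral>x. P x * (f x * f2 x) + P1 x * (f x * f1 x) + P x * (f1 x)\<^sup>2 \<partial>lborel) = 0"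
        by simp
      then show ?thesis using integral_add3[OF iA5 iA2 iA3] by simp
    qed
    define v where "v = (\<lambda>x. sqrt (P x) * f x)"
    define v1 where "v1 = (\<lambda>x. a x * f x + sqrt (P x) * f1 x)"
    have dv: "(v has_real_derivative v1 x) (at x)" for x
      unfolding v_def v1_def by (rule DERIV_cong[OF DERIV_mult[OF dg0 df]]) (simp add: algebra_simps)
    have sqx: "(p * q + s * r)\<^sup>2 = p\<^sup>2 * q\<^sup>2 + (2 * s * p) * (q * r) + (s * s) * r\<^sup>2" for p q s r :: real
      by (simp add: power2_eq_square algebra_simps)
    have v1sq: "(v1 x)\<^sup>2 = (a x)\<^sup>2 * (f x)\<^sup>2 + P1 x * (f x * f1 x) + P x * (f1 x)\<^sup>2" for x
      unfolding v1_def P1_def by (simp only: sqx Psq)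
    have vsq: "(v x)\<^sup>2 = P x * (f x)\<^sup>2" for x
      unfolding v_def by (simp add: power_mult_distrib Pnn)
    have Hv: "H1 v v1"
      unfolding H1_def
    proof (intro conjI allI impI)
      fix s t :: real assume "s \<le> t"
      show "(v1 has_integral v t - v s) {s..t}"
      proof (rule fundamental_theorem_of_calculus[OF \<open>s \<le> t\<close>])
        fix x show "(v has_vector_derivative v1 x) (at x within {s..t})"
          using dv[of x] by (simp add: has_real_derivative_iff_has_vector_derivative has_vector_derivative_at_within)
      qed
    next
      have "continuous_on UNIV v" unfolding v_def by (intro continuous_intros cg0 cf)
      moreover have "integrable lborel (\<lambda>x. (v x)\<^sup>2)" unfolding vsq by (rule iA6)
      ultimately show "sq_int v" unfolding sq_int_def using cont_meas by blast
    next
      have "continuous_on UNIV v1" unfolding v1_def by (intro continuous_intros cg0 cf ca cf1)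
      moreover have "integrable lborel (\<lambda>x. (v1 x)\<^sup>2)" unfolding v1sq
        by (intro Bochner_Integration.integrable_add iA1 iA2 iA3)
      ultimately show "sq_int v1" unfolding sq_int_def using cont_meas by blast
    qed
    define T1 where "T1 = (\<integral>x. (a x)\<^sup>2 * (f x)\<^sup>2 \<partial>lborel)"
    define T2 where "T2 = (\<integral>x. P1 x * (f x * f1 x) \<partial>lborel)"
    define T3 where "T3 = (\<integral>x. P x * (f1 x)\<^sup>2 \<partial>lborel)"
    define T4 where "T4 = (\<integral>x. potV \<gamma> x * P x * (f x)\<^sup>2 \<partial>lborel)"
    define T5 where "T5 = (\<integral>x. P x * (f x * f2 x) \<partial>lborel)"
    define T6 where "T6 = (\<integral>x. P x * (f x)\<^sup>2 \<partial>lborel)"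
    define E where "E = (\<integral>x. P2 x * (f x)\<^sup>2 \<partial>lborel)"
    have LF: "LGam_form \<gamma> v v1 = T1 + T2 + T3 + T4"
    proof -
      have "LGam_form \<gamma> v v1 = (\<integral>x. (a x)\<^sup>2 * (f x)\<^sup>2 + P1 x * (f x * f1 x) + P x * (f1 x)\<^sup>2 + potV \<gamma> x * P x * (f x)\<^sup>2 \<partial>lborel)"
        unfolding LGam_form_def by (simp add: v1sq vsq mult.assoc)
      then show ?thesis unfolding T1_def T2_def T3_def T4_def
        using integral_add4[OF iA1 iA2 iA3 iA4] by simp
    qed
    have LW: "LGam_wpair \<gamma> P f f2 = T4 - T5"
    proof -
      have "LGam_wpair \<gamma> P f f2 = (\<integral>x. potV \<gamma> x * P x * (f x)\<^sup>2 - P x * (f x * f2 x) \<partial>lborel)"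
        unfolding LGam_wpair_def
        by (rule Bochner_Integration.integral_cong) (simp_all add: algebra_simps power2_eq_square)
      then show ?thesis unfolding T4_def T5_def
        using Bochner_Integration.integral_diff[OF iA4 iA5] by simp
    qed
    have HS: "H1_sqnorm v v1 = T6 + T1 + T2 + T3"
    proof -
      have "H1_sqnorm v v1 = (\<integral>x. P x * (f x)\<^sup>2 + (a x)\<^sup>2 * (f x)\<^sup>2 + P1 x * (f x * f1 x) + P x * (f1 x)\<^sup>2 \<partial>lborel)"
        unfolding H1_sqnorm_def by (simp add: v1sq vsq add.assoc)
      then show ?thesis unfolding T1_def T2_def T3_def T6_def
        using integral_add4[OF iA6 iA1 iA2 iA3] by simp
    qed
    have HW: "H1w_sqnorm P f f1 = T6 + T3"
    proof -
      have "H1w_sqnorm P f f1 = (\<integral>x. P x * (f x)\<^sup>2 + P x * (f1 x)\<^sup>2 \<partial>lborel)"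
        unfolding H1w_sqnorm_def
        by (rule Bochner_Integration.integral_cong) (simp_all add: algebra_simps)
      then show ?thesis unfolding T6_def T3_def
        using Bochner_Integration.integral_add[OF iA6 iA3] by simp
    qed
    define N where "N = L2_sqnorm_on S f"
    have iN: "integrable lborel (\<lambda>x. indicator S x * (f x)\<^sup>2)"
      using integrable_mult_indicator[OF Sm iff] by simp
    have N_eq: "N = (\<integral>x. indicator S x * (f x)\<^sup>2 \<partial>lborel)"
      unfolding N_def L2_sqnorm_on_def set_lebesgue_integral_def by simp
    have Nnn: "0 \<le> N" unfolding N_eq by (rule Bochner_Integration.integral_nonneg) simp
    have T1nn: "0 \<le> T1" unfolding T1_def by (rule Bochner_Integration.integral_nonneg) simp
    have T1b: "T1 \<le> B1\<^sup>2 / R\<^sup>2 * N"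
    proof -
      have "T1 \<le> (\<integral>x. B1\<^sup>2 / R\<^sup>2 * (indicator S x * (f x)\<^sup>2) \<partial>lborel)"
        unfolding T1_def
      proof (rule Bochner_Integration.integral_mono[OF iA1])
        show "integrable lborel (\<lambda>x. B1\<^sup>2 / R\<^sup>2 * (indicator S x * (f x)\<^sup>2))" using iN by simp
        fix x
        show "(a x)\<^sup>2 * (f x)\<^sup>2 \<le> B1\<^sup>2 / R\<^sup>2 * (indicator S x * (f x)\<^sup>2)"
        proof (cases "x \<in> S")
          case True
          then show ?thesis using mult_right_mono[OF a2[of x], of "(f x)\<^sup>2"] by simp
        next
          case False
          then have "a x = 0" using s1 by blast
          then show ?thesis using False by simp
        qed
      qed
      then show ?thesis unfolding N_eq by simp
    qed
    have Eb: "\<bar>E\<bar> \<le> K / R\<^sup>2 * N"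
    proof -
      have pb: "\<bar>P2 x * (f x)\<^sup>2\<bar> \<le> K / R\<^sup>2 * (indicator S x * (f x)\<^sup>2)" for x
      proof (cases "x \<in> S")
        case True
        then show ?thesis using mult_right_mono[OF P2b[of x], of "(f x)\<^sup>2"] by (simp add: abs_mult)
      next
        case False
        then have "P2 x = 0" using s2 by blast
        then show ?thesis using False by simp
      qed
      have iM: "integrable lborel (\<lambda>x. K / R\<^sup>2 * (indicator S x * (f x)\<^sup>2))" using iN by simp
      have "E \<le> (\<integral>x. K / R\<^sup>2 * (indicator S x * (f x)\<^sup>2) \<partial>lborel)"
        unfolding E_def by (rule Bochner_Integration.integral_mono[OF iA7 iM]) (use pb in \<open>simp add: abs_le_iff\<close>)
      moreover have "- E \<le> (\<integral>x. K / R\<^sup>2 * (indicator S x * (f x)\<^sup>2) \<partial>lborel)"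
      proof -
        have "(\<integral>x. - (P2 x * (f x)\<^sup>2) \<partial>lborel) \<le> (\<integral>x. K / R\<^sup>2 * (indicator S x * (f x)\<^sup>2) \<partial>lborel)"
          by (rule Bochner_Integration.integral_mono[OF _ iM]) (use pb iA7 in \<open>simp_all add: abs_le_iff\<close>)
        then show ?thesis unfolding E_def by simp
      qed
      ultimately show ?thesis unfolding N_eq by simp
    qed
    have up: "LGam_form \<gamma> v v1 \<le> 2 * H1_sqnorm v v1" by (rule hyp_up[OF Hv])
    have lo: "LGam_form \<gamma> v v1 \<ge> 4 * lam0 * H1_sqnorm v v1
            - (1 / lam0) * (\<integral>x. v x * sin (theta_star \<gamma> x) \<partial>lborel)\<^sup>2" by (rule hyp_lo[OF Hv])
    define Q where "Q = (1 / lam0) * (\<integral>x. v x * sin (theta_star \<gamma> x) \<partial>lborel)\<^sup>2"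
    define M where "M = N / R\<^sup>2"
    have Mnn: "0 \<le> M" unfolding M_def using Nnn by simp
    have T1M: "T1 \<le> B1\<^sup>2 * M" using T1b unfolding M_def by simp
    have EM: "\<bar>E\<bar> \<le> K * M" using Eb unfolding M_def by simp
    have E2': "E + 2 * T2 = 0" using E2 unfolding E_def T2_def .
    have I1': "T5 + T2 + T3 = 0" using I1 unfolding T5_def T2_def T3_def .
    have CM: "C / R\<^sup>2 * N = B1\<^sup>2 * M + K * M + 2 * lam0 * (K * M) + M"
      unfolding C_def M_def by (simp add: algebra_simps add_divide_distrib)
    have lamE: "lam0 * \<bar>E\<bar> \<le> lam0 * (K * M)" using EM assms(3) by simp
    have lamT1: "0 \<le> lam0 * T1" using T1nn assms(3) by simp
    have lamT2: "lam0 * T2 \<ge> - (lam0 * \<bar>E\<bar>) / 2"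
    proof -
      have "T2 = - E / 2" using E2' by simp
      then have "lam0 * T2 = - (lam0 * E) / 2" by simp
      moreover have "lam0 * E \<le> lam0 * \<bar>E\<bar>" using assms(3) by simp
      ultimately show ?thesis by simp
    qed
    have goal1: "2 * H1w_sqnorm P f f1 + C / R\<^sup>2 * N \<ge> LGam_wpair \<gamma> P f f2"
    proof -
      have KM: "0 \<le> K * M" using Knn Mnn by simp
      have lKM: "0 \<le> lam0 * (K * M)" using KM assms(3) by simp
      have mE: "- E \<le> \<bar>E\<bar>" by simp
      show ?thesis using up LF LW HS HW I1' E2' T1M EM CM Mnn KM lKM mE by linarith
    qed
    have goal2: "LGam_wpair \<gamma> P f f2 \<ge> 4 * lam0 * H1w_sqnorm P f f1 - Q - C / R\<^sup>2 * N"
    proof -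
      have "LGam_wpair \<gamma> P f f2 = LGam_form \<gamma> v v1 - T1" using LF LW I1' by simp
      also have "\<dots> \<ge> 4 * lam0 * (T6 + T1 + T2 + T3) - Q - T1" using lo HS unfolding Q_def by simp
      finally have A: "LGam_wpair \<gamma> P f f2 \<ge> 4 * lam0 * (T6 + T3) + 4 * (lam0 * T1) + 4 * (lam0 * T2) - Q - T1"
        by (simp add: algebra_simps)
      have KM: "0 \<le> K * M" using Knn Mnn by simp
      have h4: "4 * lam0 * H1w_sqnorm P f f1 = 4 * lam0 * (T6 + T3)" by (simp add: HW)
      show ?thesis using A h4 CM lamE lamT1 lamT2 T1M Mnn KM by linarith
    qed
    show ?thesis using goal1 goal2 unfolding N_def Q_def S_def v_def by simp
  qed
  show ?thesis
  proof (intro exI[of _ C] conjI allI impI)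
    show "C > 0" by (rule Cpos)
    fix R y0 f f1 f2 assume R: "R \<ge> (1::real)" and H: "H2 f f1 f2"
    from main[OF R H refl] show "let psi0 = (\<lambda>x. \<psi> ((x - y0) / R));
          S = supp_fun (deriv psi0) in
        2 * H1w_sqnorm psi0 f f1 + C / R\<^sup>2 * L2_sqnorm_on S f \<ge> LGam_wpair \<gamma> psi0 f f2
      \<and> LGam_wpair \<gamma> psi0 f f2 \<ge> 4 * lam0 * H1w_sqnorm psi0 f f1
            - (1 / lam0) * (\<integral>x. sqrt (psi0 x) * f x * sin (theta_star \<gamma> x) \<partial>lborel)\<^sup>2
            - C / R\<^sup>2 * L2_sqnorm_on S f"
      unfolding Let_def by simp
  qed
qed


thm_deps mainTheorem10

end
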